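(* With the icosahedral setting of the context, for every $y_0\in\mathcal{I}$ and integers $n\ge2$, \[ \Delta_\kappa q_n(x;y_0)=\frac{\nu(n)}{\nu(n-2)}(\tau+2)\,q_{n-2}(x;y_0), \] and more generally for integers $m\ge1$ with $2m\le n$, \[ \Delta_\kappa^m q_n(x;y_0)=\frac{\nu(n)}{\nu(n-2m)}(\tau+2)^m\,q_{n-2m}(x;y_0). \]
   Context: Let $\tau=(1+\sqrt5)/2$. Vectors in $\mathbb{R}^3$ are row vectors; $\langle x,y\rangle=\sum x_iy_i$. For $v\neq0$, $x\sigma_v=x-2\frac{\langle x,v\rangle}{|v|^2}v$. Let $R_+=\{(2,0,0),(0,2,0),(0,0,2),(\tau,\pm\tau^{-1},\pm1),(\pm1,\tau,\pm\tau^{-1}),(\tau^{-1},\pm1,\tau),(-\tau^{-1},1,\tau),(\tau^{-1},1,-\tau)\}$ (15 vectors, signs independent). For real $\kappa\ge0$ the Dunkl operators are $\mathcal{D}_if(x)=\partial_if(x)+\kappa\sum_{v\in R_+}\frac{f(x)-f(x\sigma_v)}{\langle x,v\rangle}v_i$, and the Dunkl Laplacian is $\Delta_\kappa=\sum_{i=1}^3\mathcal{D}_i^2$. Let $\mathcal{I}=\{(0,\pm\tau,\pm1),(\pm1,0,\pm\tau),(\pm\tau,\pm1,0)\}$. For $y_0\in\mathcal{I}$, $q_n(x;y_0)$ are defined by $\left(1-r\langle x,y_0\rangle\right)^{-1}\prod_{y\in\mathcal{I}}\left(1-r\langle x,y\rangle\right)^{-\kappa}=\sum_{n\ge0}q_n(x;y_0)r^n$.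 Define $\nu(n)=2^n(6\kappa+1)_s(5\kappa+\tfrac12)_t$ with $s=\lfloor n/2\rfloor$, $t=\lfloor (n+1)/2\rfloor$, $(a)_k=a(a+1)\cdots(a+k-1)$. *)

theory Defs
  imports "HOL-Analysis.Analysis"
begin

definition tau :: real where "tau = (1 + sqrt 5) / 2"

definition v3 :: "real \<Rightarrow> real \<Rightarrow> real \<Rightarrow> real^3" where
  "v3 a b c = vector [a, b, c]"

definition refl :: "real^3 \<Rightarrow> real^3 \<Rightarrow> real^3" where
  "refl v x = x - (2 * (x \<bullet> v) / (v \<bullet> v)) *\<^sub>R v"

definition Rplus :: "(real^3) set" where
  "Rplus = {v3 2 0 0, v3 0 2 0, v3 0 0 2}
     \<union> {v3 tau (s * inverse tau) t | s t. s \<in> {-1,1} \<and> t \<in> {-1,1}}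
     \<union> {v3 s tau (t * inverse tau) | s t. s \<in> {-1,1} \<and> t \<in> {-1,1}}
     \<union> {v3 (inverse tau) s tau | s. s \<in> {-1,1}}
     \<union> {v3 (- inverse tau) 1 tau, v3 (inverse tau) 1 (- tau)}"

definition Icos :: "(real^3) set" where
  "Icos = {v3 0 (s * tau) t | s t. s \<in> {-1,1} \<and> t \<in> {-1,1}}
     \<union> {v3 s 0 (t * tau) | s t. s \<in> {-1,1} \<and> t \<in> {-1,1}}
     \<union> {v3 (s * tau) t 0 | s t. s \<in> {-1,1} \<and> t \<in> {-1,1}}"

definition partial :: "3 \<Rightarrow> (real^3 \<Rightarrow> real) \<Rightarrow> real^3 \<Rightarrow> real" where
  "partial i f x = deriv (\<lambda>t. f (x + t *\<^sub>R axis i 1)) 0"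

definition dunkl :: "real \<Rightarrow> 3 \<Rightarrow> (real^3 \<Rightarrow> real) \<Rightarrow> real^3 \<Rightarrow> real" where
  "dunkl \<kappa> i f x = partial i f x
     + \<kappa> * (\<Sum>v\<in>Rplus. (f x - f (refl v x)) / (x \<bullet> v) * (v $ i))"

definition dunkl_lap :: "real \<Rightarrow> (real^3 \<Rightarrow> real) \<Rightarrow> real^3 \<Rightarrow> real" where
  "dunkl_lap \<kappa> f x = (\<Sum>i\<in>(UNIV :: 3 set). dunkl \<kappa> i (dunkl \<kappa> i f) x)"

definition genfun :: "real \<Rightarrow> real^3 \<Rightarrow> real^3 \<Rightarrow> real \<Rightarrow> real" where
  "genfun \<kappa> y0 x r = inverse (1 - r * (x \<bullet> y0))
     * (\<Prod>y\<in>Icos. (1 - r * (x \<bullet> y)) powr (- \<kappa>))"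

text \<open>q_n(x;y0): the n-th coefficient of the power series in r, i.e. the
  n-th Taylor coefficient at r = 0 of the (analytic near 0) generating function.\<close>
definition qpoly :: "real \<Rightarrow> nat \<Rightarrow> real^3 \<Rightarrow> real^3 \<Rightarrow> real" where
  "qpoly \<kappa> n y0 x = (deriv ^^ n) (genfun \<kappa> y0 x) 0 / fact n"

definition nu :: "real \<Rightarrow> nat \<Rightarrow> real" where
  "nu \<kappa> n = 2 ^ n * pochhammer (6 * \<kappa> + 1) (n div 2)
                  * pochhammer (5 * \<kappa> + 1/2) ((n + 1) div 2)"

end

theory Submission
  imports Defs
begin


lemma tau_sq: "tau * tau = tau + 1"
  unfolding tau_def by (simp add: field_simps)

lemma tau_inv: "inverse tau = tau - 1"
proof (rule inverse_unique)
  show "tau * (tau - 1) = 1" using tau_sq by (simp add: algebra_simps)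
qed

definition emb :: "int \<times> int \<Rightarrow> real" where "emb p = of_int (fst p) + of_int (snd p) * tau"

fun zm :: "int\<times>int \<Rightarrow> int\<times>int \<Rightarrow> int\<times>int" where "zm (a,b) (c,d) = (a*c+b*d, a*d+b*c+b*d)"
fun za :: "int\<times>int \<Rightarrow> int\<times>int \<Rightarrow> int\<times>int" where "za (a,b) (c,d) = (a+c, b+d)"
fun zn :: "int\<times>int \<Rightarrow> int\<times>int" where "zn (a,b) = (-a,-b)"
fun zhalf :: "int\<times>int \<Rightarrow> int\<times>int" where "zhalf (a,b) = (a div 2, b div 2)"

type_synonym zv = "(int\<times>int)\<times>(int\<times>int)\<times>(int\<times>int)"

fun embv :: "zv \<Rightarrow> real^3" where "embv (p,q,r) = v3 (emb p) (emb q) (emb r)"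
fun zdot :: "zv \<Rightarrow> zv \<Rightarrow> int\<times>int" where
  "zdot (p,q,r) (p',q',r') = za (za (zm p p') (zm q q')) (zm r r')"
fun vneg :: "zv \<Rightarrow> zv" where "vneg (p,q,r) = (zn p, zn q, zn r)"
fun vscale :: "int\<times>int \<Rightarrow> zv \<Rightarrow> zv" where "vscale c (p,q,r) = (zm c p, zm c q, zm c r)"
fun vsub :: "zv \<Rightarrow> zv \<Rightarrow> zv" where
  "vsub (p,q,r) (p',q',r') = (za p (zn p'), za q (zn q'), za r (zn r'))"
fun vhalf :: "zv \<Rightarrow> zv" where "vhalf (p,q,r) = (zhalf p, zhalf q, zhalf r)"
definition zrefl2 :: "zv \<Rightarrow> zv \<Rightarrow> zv" where
  "zrefl2 v y = vsub (vscale (2,0) y) (vscale (zdot y v) v)"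
definition zrefl :: "zv \<Rightarrow> zv \<Rightarrow> zv" where "zrefl v y = vhalf (zrefl2 v y)"

lemma emb_zm: "emb (zm p q) = emb p * emb q"
proof -
  obtain a b c d where p: "p = (a,b)" and q: "q = (c,d)" by (cases p, cases q) auto
  have "emb p * emb q = a*c + (a*d+b*c)*tau + b*d*(tau*tau)"
    by (simp add: p q emb_def algebra_simps)
  also have "\<dots> = emb (zm p q)" by (simp add: p q emb_def tau_sq algebra_simps)
  finally show ?thesis by simp
qed

lemma emb_za: "emb (za p q) = emb p + emb q"
  by (cases p, cases q) (simp add: emb_def algebra_simps)
lemma emb_zn: "emb (zn p) = - emb p"
  by (cases p) (simp add: emb_def algebra_simps)

lemma no_int_sol: "(5::int) * b^2 = c^2 \<Longrightarrow> b = 0"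
proof (induction "nat \<bar>b\<bar>" arbitrary: b c rule: less_induct)
  case less
  show ?case
  proof (rule ccontr)
    assume b0: "b \<noteq> 0"
    have p5: "prime (5::int)" by simp
    have "5 dvd c^2" using less.prems by (metis dvd_triv_left)
    hence "5 dvd c" using p5 prime_dvd_power by blast
    then obtain d where d: "c = 5*d" by blast
    have "b^2 = 5 * d^2" using less.prems d by (simp add: power2_eq_square)
    hence "5 dvd b^2" by simp
    hence "5 dvd b" using p5 prime_dvd_power by blast
    then obtain e where e: "b = 5*e" by blast
    have "5 * e^2 = d^2" using \<open>b^2 = 5 * d^2\<close> e by (simp add: power2_eq_square)
    moreover have "nat \<bar>e\<bar> < nat \<bar>b\<bar>" using b0 e by auto
    ultimately have "e = 0" using less.hyps by blast
    with e b0 show False by simp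
  qed
qed

lemma emb_zero: "emb p = 0 \<Longrightarrow> p = (0,0)"
proof -
  assume h: "emb p = 0"
  obtain a b where p: "p = (a,b)" by (cases p)
  have "of_int a + of_int b * ((1 + sqrt 5)/2) = (0::real)" using h by (simp add: p emb_def tau_def)
  hence hb: "of_int b * sqrt 5 = - of_int (2*a+b)" by (simp add: field_simps)
  have "(of_int b * sqrt 5)^2 = (- of_int (2*a+b))^2" by (subst hb) (rule refl)
  hence "(of_int b * sqrt 5)^2 = (of_int (2*a+b))^2" by (simp only: power2_minus)
  hence "real_of_int (5 * b^2) = of_int ((2*a+b)^2)" by (simp add: power_mult_distrib)
  hence "5 * b^2 = (2*a+b)^2" by linarith
  hence "b = 0" by (rule no_int_sol)
  with h show ?thesis by (simp add: p emb_def)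
qed

lemma emb_inj: "emb p = emb q \<longleftrightarrow> p = q"
proof
  assume "emb p = emb q"
  hence "emb (za p (zn q)) = 0" by (simp add: emb_za emb_zn)
  hence "za p (zn q) = (0,0)" by (rule emb_zero)
  thus "p = q" by (cases p, cases q) auto
qed simp

lemma v3_eq: "v3 a b c = v3 a' b' c' \<longleftrightarrow> a = a' \<and> b = b' \<and> c = c'"
  by (auto simp: v3_def vec_eq_iff forall_3)

lemma v3_nth [simp]: "v3 a b c $ 1 = a" "v3 a b c $ 2 = b" "v3 a b c $ 3 = c"
  by (simp_all add: v3_def)

lemma embv_inj: "embv u = embv w \<longleftrightarrow> u = w"
  by (cases u, cases w) (auto simp: v3_eq emb_inj)

lemma inj_embv: "inj embv" by (simp add: inj_def embv_inj)

lemma inner_v3: "v3 a b c \<bullet> v3 a' b' c' = a*a' + b*b' + c*c'"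
  by (simp add: inner_vec_def sum_3 v3_def)

lemma embv_dot: "embv u \<bullet> embv w = emb (zdot u w)"
  by (cases u, cases w) (simp add: inner_v3 emb_za emb_zm del: za.simps zm.simps)

lemma v3_neg: "- v3 a b c = v3 (-a) (-b) (-c)" by (simp add: v3_def vec_eq_iff forall_3)
lemma v3_sub: "v3 a b c - v3 a' b' c' = v3 (a-a') (b-b') (c-c')" by (simp add: v3_def vec_eq_iff forall_3)
lemma v3_scale: "r *\<^sub>R v3 a b c = v3 (r*a) (r*b) (r*c)" by (simp add: v3_def vec_eq_iff forall_3)

lemma embv_neg: "embv (vneg u) = - embv u"
  by (cases u) (simp add: v3_neg emb_zn del: zn.simps)
lemma embv_scale: "embv (vscale c u) = emb c *\<^sub>R embv u"
  by (cases u) (simp add: v3_scale emb_zm del: zm.simps)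
lemma embv_sub: "embv (vsub u w) = embv u - embv w"
  by (cases u, cases w) (simp add: v3_sub emb_za emb_zn del: za.simps zn.simps)

lemma emb_2: "emb (2,0) = 2" by (simp add: emb_def)

lemma refl_embv:
  assumes "zdot v v = (4,0)" "zrefl2 v y = vscale (2,0) (zrefl v y)"
  shows "refl (embv v) (embv y) = embv (zrefl v y)"
proof -
  have "embv (zrefl2 v y) = 2 *\<^sub>R embv y - emb (zdot y v) *\<^sub>R embv v"
    by (simp add: zrefl2_def embv_sub embv_scale emb_2)
  also have "embv (zrefl2 v y) = 2 *\<^sub>R embv (zrefl v y)" using assms(2) by (simp add: embv_scale emb_2)
  finally have "2 *\<^sub>R embv (zrefl v y) = 2 *\<^sub>R embv y - emb (zdot y v) *\<^sub>R embv v" .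
  hence "\<forall>j. 2 * embv (zrefl v y) $ j = 2 * embv y $ j - emb (zdot y v) * embv v $ j"
    by (simp add: vec_eq_iff)
  hence "embv (zrefl v y) = embv y - (emb (zdot y v) / 2) *\<^sub>R embv v"
    by (simp add: vec_eq_iff field_simps)
  moreover have "embv v \<bullet> embv v = 4" using assms(1) by (simp add: embv_dot emb_def)
  ultimately show ?thesis by (simp add: refl_def embv_dot)
qed


definition Il :: "zv list" where "Il = [((0,-1),(-1,0),(0,0)), ((0,-1),(1,0),(0,0)), ((0,1),(-1,0),(0,0)), ((0,1),(1,0),(0,0)), ((-1,0),(0,0),(0,-1)), ((-1,0),(0,0),(0,1)), ((1,0),(0,0),(0,-1)), ((1,0),(0,0),(0,1)), ((0,0),(0,-1),(-1,0)), ((0,0),(0,-1),(1,0)), ((0,0),(0,1),(-1,0)), ((0,0),(0,1),(1,0))]"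
definition Rl :: "zv list" where "Rl = [((1,-1),(1,0),(0,1)), ((-1,1),(1,0),(0,-1)), ((-1,1),(-1,0),(0,1)), ((-1,1),(1,0),(0,1)), ((-1,0),(0,1),(1,-1)), ((-1,0),(0,1),(-1,1)), ((1,0),(0,1),(1,-1)), ((1,0),(0,1),(-1,1)), ((0,1),(1,-1),(-1,0)), ((0,1),(1,-1),(1,0)), ((0,1),(-1,1),(-1,0)), ((0,1),(-1,1),(1,0)), ((2,0),(0,0),(0,0)), ((0,0),(2,0),(0,0)), ((0,0),(0,0),(2,0))]"

lemma pm2: "{f s t |s t. s \<in> {-1::real,1} \<and> t \<in> {-1::real,1}} = {f (-1) (-1), f (-1) 1, f 1 (-1), f 1 1}"
  by auto
lemma pm1: "{f s |s. s \<in> {-1::real,1}} = {f (-1), f 1}"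
  by auto

lemma emb_vals [simp]: "emb (0,0) = 0" "emb (1,0) = 1" "emb (-1,0) = -1" "emb (0,1) = tau"
  "emb (0,-1) = -tau" "emb (2,0) = 2" "emb (-1,1) = inverse tau" "emb (1,-1) = - inverse tau"
  by (simp_all add: emb_def tau_inv)

lemma Icos_eq: "Icos = embv ` set Il"
  unfolding Icos_def Il_def pm2 by simp

lemma Rplus_eq: "Rplus = embv ` set Rl"
  unfolding Rplus_def Rl_def pm2 pm1 by simp


lemma chk1: "list_all (\<lambda>v. zdot v v = (4,0)) Rl" by code_simp
lemma chk2: "list_all (\<lambda>v. list_all (\<lambda>y. zrefl2 v y = vscale (2,0) (zrefl v y) \<and> zrefl v y \<in> set Il) Il) Rl"
  by code_simp
lemma chk3: "list_all (\<lambda>y. vneg y \<in> set Il) Il" by code_simp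
lemma chk4: "list_all (\<lambda>v. list_all (\<lambda>w. zrefl2 v w = vscale (2,0) (zrefl v w) \<and>
   (zrefl v w \<in> set Rl \<or> vneg (zrefl v w) \<in> set Rl)) Rl) Rl" by code_simp
lemma chk5: "list_all (\<lambda>y0. distinct (map (\<lambda>v. zrefl v y0) (filter (\<lambda>v. zdot y0 v \<noteq> (0,0)) Rl)) \<and>
   list_all (\<lambda>w. w \<in> set (filter (\<lambda>y. y \<noteq> y0 \<and> y \<noteq> vneg y0) Il)) (map (\<lambda>v. zrefl v y0) (filter (\<lambda>v. zdot y0 v \<noteq> (0,0)) Rl)) \<and>
   length (filter (\<lambda>v. zdot y0 v \<noteq> (0,0)) Rl) = length (filter (\<lambda>y. y \<noteq> y0 \<and> y \<noteq> vneg y0) Il)) Il"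
  by code_simp

lemma distinct_Il: "distinct Il" by code_simp


declare embv.simps[simp del] zdot.simps[simp del] vneg.simps[simp del] zm.simps[simp del] za.simps[simp del] zn.simps[simp del]

lemma chk6: "list_all (\<lambda>y. zdot y y = (2,1)) Il" by code_simp

lemma finite_Icos: "finite Icos" by (simp add: Icos_eq)
lemma finite_Rplus: "finite Rplus" by (simp add: Rplus_eq)

lemma Rplus_norm: assumes "v \<in> Rplus" shows "v \<bullet> v = 4"
proof -
  obtain pv where pv: "pv \<in> set Rl" "v = embv pv" using assms by (auto simp: Rplus_eq)
  have "zdot pv pv = (4,0)" using chk1 pv by (auto simp: list_all_iff)
  thus ?thesis using pv by (simp add: embv_dot emb_def del: embv.simps)
qed

lemma Icos_norm: assumes "y \<in> Icos" shows "y \<bullet> y = tau + 2"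
proof -
  obtain pv where pv: "pv \<in> set Il" "y = embv pv" using assms by (auto simp: Icos_eq)
  have "zdot pv pv = (2,1)" using chk6 pv by (auto simp: list_all_iff)
  thus ?thesis using pv by (simp add: embv_dot emb_def del: embv.simps)
qed

lemma Rplus_nz: "v \<in> Rplus \<Longrightarrow> v \<noteq> 0"
  using Rplus_norm by force

lemma refl_Icos: assumes "v \<in> Rplus" "y \<in> Icos" shows "refl v y \<in> Icos"
proof -
  obtain pv py where pv: "pv \<in> set Rl" "v = embv pv" and py: "py \<in> set Il" "y = embv py"
    using assms by (auto simp: Rplus_eq Icos_eq)
  have "zdot pv pv = (4,0)" using chk1 pv by (auto simp: list_all_iff)
  moreover have "zrefl2 pv py = vscale (2,0) (zrefl pv py) \<and> zrefl pv py \<in> set Il"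
    using chk2 pv py by (auto simp: list_all_iff)
  ultimately show ?thesis using pv py refl_embv by (auto simp: Icos_eq)
qed

lemma neg_Icos: "y \<in> Icos \<Longrightarrow> - y \<in> Icos"
  using chk3 by (auto simp: Icos_eq list_all_iff embv_neg[symmetric])

lemma refl_Rplus: assumes "v \<in> Rplus" "w \<in> Rplus" shows "refl v w \<in> Rplus \<or> - refl v w \<in> Rplus"
proof -
  obtain pv pw where pv: "pv \<in> set Rl" "v = embv pv" and pw: "pw \<in> set Rl" "w = embv pw"
    using assms by (auto simp: Rplus_eq)
  have "zdot pv pv = (4,0)" using chk1 pv by (auto simp: list_all_iff)
  moreover have "zrefl2 pv pw = vscale (2,0) (zrefl pv pw) \<and> (zrefl pv pw \<in> set Rl \<or> vneg (zrefl pv pw) \<in> set Rl)"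
    using chk4 pv pw by (auto simp: list_all_iff)
  ultimately show ?thesis using pv pw refl_embv by (auto simp: Rplus_eq embv_neg[symmetric])
qed

lemma refl_orth: "x \<bullet> v = 0 \<Longrightarrow> refl v x = x"
  by (simp add: refl_def)

lemma key_sum:
  fixes H :: "real^3 \<Rightarrow> 'a::comm_monoid_add"
  assumes "y0 \<in> Icos" "H y0 = 0"
  shows "(\<Sum>v\<in>Rplus. H (refl v y0)) = (\<Sum>y\<in>Icos - {y0, -y0}. H y)"
proof -
  obtain p0 where p0: "p0 \<in> set Il" "y0 = embv p0" using assms by (auto simp: Icos_eq)
  define A where "A = filter (\<lambda>v. zdot p0 v \<noteq> (0,0)) Rl"
  define B where "B = filter (\<lambda>y. y \<noteq> p0 \<and> y \<noteq> vneg p0) Il"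
  have c5b: "distinct (map (\<lambda>v. zrefl v p0) A) \<and> list_all (\<lambda>w. w \<in> set B) (map (\<lambda>v. zrefl v p0) A) \<and> length A = length B"
    using chk5[unfolded list_all_iff[of _ Il]] p0(1) unfolding A_def B_def by blast
  have "set (map (\<lambda>v. zrefl v p0) A) \<subseteq> set B"
    using c5b by (metis list_all_iff subsetI)
  hence c5a: "distinct (map (\<lambda>v. zrefl v p0) A) \<and> set (map (\<lambda>v. zrefl v p0) A) \<subseteq> set B \<and> length A = length B"
    using c5b by blast
  have dB: "distinct B" using distinct_Il by (simp add: B_def)
  have "card (set (map (\<lambda>v. zrefl v p0) A)) = card (set B)"
    using c5a dB by (metis distinct_card length_map)
  hence c5: "distinct (map (\<lambda>v. zrefl v p0) A) \<and> set (map (\<lambda>v. zrefl v p0) A) = set B"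
    using c5a by (metis card_subset_eq finite_set)
  have sub: "embv ` set A \<subseteq> Rplus" by (auto simp: A_def Rplus_eq)
  have "(\<Sum>v\<in>Rplus. H (refl v y0)) = (\<Sum>v\<in>embv ` set A. H (refl v y0))"
  proof (rule sum.mono_neutral_right[OF finite_Rplus sub], rule ballI)
    fix v assume v: "v \<in> Rplus - embv ` set A"
    then obtain pv where pv: "pv \<in> set Rl" "v = embv pv" by (auto simp: Rplus_eq)
    have "pv \<notin> set A" using v pv by auto
    hence "zdot p0 pv = (0,0)" using pv by (auto simp: A_def)
    hence "y0 \<bullet> v = 0" using p0 pv by (simp add: embv_dot)
    thus "H (refl v y0) = 0" using assms(2) by (simp add: refl_orth)
  qed
  also have "\<dots> = (\<Sum>pv\<in>set A. H (refl (embv pv) y0))"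
    by (subst sum.reindex) (auto simp: inj_on_def embv_inj)
  also have "\<dots> = (\<Sum>pv\<in>set A. H (embv (zrefl pv p0)))"
  proof (rule sum.cong[OF refl])
    fix pv assume pv: "pv \<in> set A"
    hence pvR: "pv \<in> set Rl" by (simp add: A_def)
    have "zdot pv pv = (4,0)" using chk1 pvR by (auto simp: list_all_iff)
    moreover have "zrefl2 pv p0 = vscale (2,0) (zrefl pv p0)"
      using chk2 pvR p0 by (auto simp: list_all_iff)
    ultimately show "H (refl (embv pv) y0) = H (embv (zrefl pv p0))" using p0 refl_embv by simp
  qed
  also have "\<dots> = (\<Sum>w\<in>set B. H (embv w))"
  proof -
    have inj: "inj_on (\<lambda>v. zrefl v p0) (set A)" using c5 by (simp add: distinct_map)
    have "(\<lambda>v. zrefl v p0) ` set A = set B" using c5 by simp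
    thus ?thesis using sum.reindex[OF inj, of "\<lambda>w. H (embv w)"] by simp
  qed
  also have "\<dots> = (\<Sum>y\<in>embv ` set B. H y)"
    by (subst sum.reindex) (auto simp: inj_on_def embv_inj)
  also have "embv ` set B = Icos - {y0, -y0}"
    using p0 by (auto simp: B_def Icos_eq embv_inj embv_neg[symmetric])
  finally show ?thesis .
qed


notation fps_nth (infixl "$$" 75)

definition Bk :: "real \<Rightarrow> real \<Rightarrow> real fps" where
  "Bk \<kappa> a = Abs_fps (\<lambda>k. pochhammer \<kappa> k / fact k * a^k)"
definition Bd :: "real \<Rightarrow> real \<Rightarrow> real \<Rightarrow> real fps" where
  "Bd \<kappa> a c = Abs_fps (\<lambda>k. c * of_nat k * pochhammer \<kappa> k / fact k * a^(k-1))"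
definition Ef :: "real \<Rightarrow> real fps" where "Ef a = 1 - fps_const a * fps_X"
definition negf :: "real fps \<Rightarrow> real fps" where "negf f = Abs_fps (\<lambda>k. (-1)^k * f $$ k)"

lemma Bk_nth: "Bk \<kappa> a $$ k = pochhammer \<kappa> k / fact k * a^k" by (simp add: Bk_def)
lemma Bd_nth: "Bd \<kappa> a c $$ k = c * of_nat k * pochhammer \<kappa> k / fact k * a^(k-1)" by (simp add: Bd_def)
lemma Bk1_nth: "Bk 1 a $$ k = a^k" by (simp add: Bk_def pochhammer_fact[symmetric])

lemma cX_nth: "(fps_const (a::real) * fps_X * f) $$ k = (if k = 0 then 0 else a * f $$ (k-1))"
  by (simp only: mult.assoc fps_mult_left_const_nth fps_X_mult_nth) simp

lemma Ef_mult_nth: "(Ef a * (f::real fps)) $$ k = f $$ k - (if k = 0 then 0 else a * f $$ (k-1))"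
  by (simp add: Ef_def algebra_simps cX_nth del: fps_mult_left_const_nth)

lemma Ef_nth0 [simp]: "Ef a $$ 0 = 1" by (simp add: Ef_def)

lemma E_G: "Ef a * Bk 1 a = 1"
proof (rule fps_ext)
  fix k show "(Ef a * Bk 1 a) $$ k = 1 $$ k"
    by (cases k) (simp add: Bk1_nth Ef_def, simp add: Ef_mult_nth Bk1_nth)
qed

lemma poch_step: "of_nat (Suc k) * (pochhammer (\<kappa>::real) (Suc k) / fact (Suc k)) = pochhammer \<kappa> k / fact k * (\<kappa> + of_nat k)"
  by (simp add: pochhammer_Suc field_simps del: of_nat_Suc)

lemma Bk_deriv_E: "Ef a * fps_deriv (Bk \<kappa> a) = fps_const (\<kappa> * a) * Bk \<kappa> a"
proof (rule fps_ext)
  fix k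
  show "(Ef a * fps_deriv (Bk \<kappa> a)) $$ k = (fps_const (\<kappa> * a) * Bk \<kappa> a) $$ k"
  proof (cases k)
    case 0 thus ?thesis by (simp add: Ef_mult_nth Bk_nth)
  next
    case (Suc j)
    have e1: "of_nat (Suc (Suc j)) * (pochhammer \<kappa> (Suc (Suc j)) / fact (Suc (Suc j))) = pochhammer \<kappa> (Suc j) / fact (Suc j) * (\<kappa> + of_nat (Suc j))"
      by (rule poch_step)
    have e2: "of_nat (Suc j) * (pochhammer \<kappa> (Suc j) / fact (Suc j)) = pochhammer \<kappa> j / fact j * (\<kappa> + of_nat j)"
      by (rule poch_step)
    have "(Ef a * fps_deriv (Bk \<kappa> a)) $$ k = of_nat (Suc (Suc j)) * (pochhammer \<kappa> (Suc (Suc j)) / fact (Suc (Suc j))) * a^(Suc (Suc j))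
        - a * (of_nat (Suc j) * (pochhammer \<kappa> (Suc j) / fact (Suc j)) * a^(Suc j))"
      by (simp add: Suc Ef_mult_nth Bk_nth del: of_nat_Suc fact_Suc pochhammer_Suc)
    also have "\<dots> = pochhammer \<kappa> (Suc j) / fact (Suc j) * (\<kappa> + of_nat (Suc j)) * a^(Suc (Suc j))
        - a * (of_nat (Suc j) * (pochhammer \<kappa> (Suc j) / fact (Suc j)) * a^(Suc j))"
      by (simp only: e1)
    also have "\<dots> = \<kappa> * a * (pochhammer \<kappa> (Suc j) / fact (Suc j) * a^(Suc j))"
      by (simp add: field_simps del: of_nat_Suc fact_Suc pochhammer_Suc)
    also have "\<dots> = (fps_const (\<kappa> * a) * Bk \<kappa> a) $$ k" by (simp add: Suc Bk_nth del: fact_Suc pochhammer_Suc)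
    finally show ?thesis .
  qed
qed

lemma Bd_E: "Ef a * Bd \<kappa> a c = fps_const (\<kappa> * c) * fps_X * Bk \<kappa> a"
proof (rule fps_ext)
  fix k
  show "(Ef a * Bd \<kappa> a c) $$ k = (fps_const (\<kappa> * c) * fps_X * Bk \<kappa> a) $$ k"
  proof (cases k)
    case 0 thus ?thesis by (simp add: Ef_mult_nth Bd_nth cX_nth)
  next
    case (Suc j)
    have e1: "of_nat (Suc j) * (pochhammer \<kappa> (Suc j) / fact (Suc j)) = pochhammer \<kappa> j / fact j * (\<kappa> + of_nat j)"
      by (rule poch_step)
    have aj: "a * (of_nat j * pochhammer \<kappa> j / fact j * a^(j-1)) = of_nat j * pochhammer \<kappa> j / fact j * a^j"
      by (cases j) (simp_all add: algebra_simps)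
    have "(Ef a * Bd \<kappa> a c) $$ k = c * (of_nat (Suc j) * (pochhammer \<kappa> (Suc j) / fact (Suc j))) * a^j
        - c * (a * (of_nat j * pochhammer \<kappa> j / fact j * a^(j-1)))"
      by (simp add: Suc Ef_mult_nth Bd_nth del: of_nat_Suc fact_Suc pochhammer_Suc) (simp add: mult_ac)
    also have "\<dots> = c * (pochhammer \<kappa> j / fact j * (\<kappa> + of_nat j)) * a^j
        - c * (of_nat j * pochhammer \<kappa> j / fact j * a^j)"
      by (simp only: e1 aj)
    also have "\<dots> = \<kappa> * c * (pochhammer \<kappa> j / fact j * a^j)"
      by (simp add: field_simps)
    also have "\<dots> = (fps_const (\<kappa> * c) * fps_X * Bk \<kappa> a) $$ k" by (simp add: Suc cX_nth Bk_nth)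
    finally show ?thesis .
  qed
qed

lemma G_E: "Bk 1 a * Ef a = 1" using E_G by (simp add: mult.commute)

lemma Bd_eq: "Bd \<kappa> a c = Bk \<kappa> a * (fps_const (\<kappa> * c) * fps_X * Bk 1 a)"
proof -
  have "Bd \<kappa> a c = (Bk 1 a * Ef a) * Bd \<kappa> a c" by (simp add: G_E)
  also have "\<dots> = Bk 1 a * (fps_const (\<kappa> * c) * fps_X * Bk \<kappa> a)" by (simp only: mult.assoc Bd_E)
  finally show ?thesis by (simp add: algebra_simps)
qed

lemma Bk_deriv: "fps_deriv (Bk \<kappa> a) = Bk \<kappa> a * (fps_const (\<kappa> * a) * Bk 1 a)"
proof -
  have "fps_deriv (Bk \<kappa> a) = (Bk 1 a * Ef a) * fps_deriv (Bk \<kappa> a)" by (simp add: G_E)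
  also have "\<dots> = Bk 1 a * (fps_const (\<kappa> * a) * Bk \<kappa> a)" by (simp only: mult.assoc Bk_deriv_E)
  finally show ?thesis by (simp add: algebra_simps)
qed

lemma Bk_line: "((\<lambda>t. Bk \<kappa> (a + t * c) $$ k) has_real_derivative Bd \<kappa> a c $$ k) (at 0)"
proof -
  have "((\<lambda>t. pochhammer \<kappa> k / fact k * (a + t * c)^k) has_real_derivative
         pochhammer \<kappa> k / fact k * (of_nat k * (a + 0 * c)^(k-1) * c)) (at 0)"
    by (auto intro!: derivative_eq_intros)
  thus ?thesis by (simp add: Bk_nth Bd_nth algebra_simps)
qed

lemma G_diff: "Bk 1 a - Bk 1 b = fps_const (a - b) * fps_X * Bk 1 a * Bk 1 b"
proof -
  have "Bk 1 a - Bk 1 b = Bk 1 a * Bk 1 b * (Ef b - Ef a)"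
    using E_G[of a] E_G[of b] by (simp add: algebra_simps)
  also have "Ef b - Ef a = fps_const (a - b) * fps_X" by (simp add: Ef_def algebra_simps)
  finally show ?thesis by (simp add: algebra_simps)
qed

lemma G_Xa: "fps_const a * fps_X * Bk 1 a = Bk 1 a - 1"
  using E_G[of a] by (simp add: Ef_def algebra_simps)

lemma G_pm: "2 * (Bk 1 a * Bk 1 (-a)) = Bk 1 a + Bk 1 (-a)"
proof -
  have "Bk 1 a + Bk 1 (-a) = Bk 1 a * Bk 1 (-a) * (Ef a + Ef (-a))"
    using E_G[of a] E_G[of "-a"] by (simp add: algebra_simps)
  also have "Ef a + Ef (-a) = 2" by (simp add: Ef_def)
  finally show ?thesis by (simp add: algebra_simps)
qed

lemma negf_mult: "negf (f * g) = negf f * negf g"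
proof (rule fps_ext)
  fix n
  have "negf (f * g) $$ n = (\<Sum>i=0..n. (-1)^i * f $$ i * ((-1)^(n-i) * g $$ (n-i)))"
    unfolding negf_def fps_mult_nth
    by (simp add: sum_distrib_left) (rule sum.cong, simp_all add: algebra_simps power_add[symmetric])
  thus "negf (f * g) $$ n = (negf f * negf g) $$ n" by (simp add: negf_def fps_mult_nth mult.assoc)
qed

lemma negf_1: "negf 1 = 1"
  by (rule fps_ext) (simp add: negf_def)

lemma negf_prod: "negf (\<Prod>y\<in>S. F y) = (\<Prod>y\<in>S. negf (F y))"
  by (induction S rule: infinite_finite_induct) (simp_all add: negf_1 negf_mult)

lemma negf_Bk: "negf (Bk \<kappa> a) = Bk \<kappa> (-a)"
  by (rule fps_ext) (simp add: negf_def Bk_nth power_minus[of a] mult_ac)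

lemma fps_deriv_prod':
  assumes "finite S" "\<And>y. y \<in> S \<Longrightarrow> fps_deriv (F y) = F y * L y"
  shows "fps_deriv (\<Prod>y\<in>S. F y) = (\<Prod>y\<in>S. F y) * (\<Sum>y\<in>S. L y)"
  using assms by (induction S rule: finite_induct) (simp_all add: algebra_simps)

definition cder :: "(real \<Rightarrow> real fps) \<Rightarrow> real fps \<Rightarrow> bool" where
  "cder F F' \<longleftrightarrow> (\<forall>k. ((\<lambda>t. F t $$ k) has_real_derivative F' $$ k) (at 0))"

lemma cder_mult:
  assumes "cder F F'" "cder H H'"
  shows "cder (\<lambda>t. F t * H t) (F' * H 0 + F 0 * H')"
  unfolding cder_def
proof
  fix k
  have d: "((\<lambda>t. \<Sum>i=0..k. F t $$ i * H t $$ (k - i)) has_real_derivative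
        (\<Sum>i=0..k. F' $$ i * H 0 $$ (k - i) + H' $$ (k-i) * F 0 $$ i)) (at 0)"
    using assms unfolding cder_def by (intro DERIV_sum DERIV_mult) auto
  have eq: "(F' * H 0 + F 0 * H') $$ k = (\<Sum>i=0..k. F' $$ i * H 0 $$ (k - i) + H' $$ (k-i) * F 0 $$ i)"
    by (simp only: fps_add_nth fps_mult_nth sum.distrib) (simp add: mult.commute)
  show "((\<lambda>t. (F t * H t) $$ k) has_real_derivative (F' * H 0 + F 0 * H') $$ k) (at 0)"
    unfolding eq fps_mult_nth using d .
qed

lemma cder_const: "cder (\<lambda>t. c) 0"
  by (simp add: cder_def)

lemma cder_prod:
  assumes "finite S" "\<And>y. y \<in> S \<Longrightarrow> cder (F y) (F y 0 * L y)"
  shows "cder (\<lambda>t. \<Prod>y\<in>S. F y t) ((\<Prod>y\<in>S. F y 0) * (\<Sum>y\<in>S. L y))"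
  using assms
proof (induction S rule: finite_induct)
  case empty thus ?case using cder_const[of 1] by simp
next
  case (insert y S)
  have "cder (\<lambda>t. F y t * (\<Prod>y\<in>S. F y t)) (F y 0 * L y * (\<Prod>y\<in>S. F y 0) + F y 0 * ((\<Prod>y\<in>S. F y 0) * (\<Sum>y\<in>S. L y)))"
    using insert by (intro cder_mult[where F="F y", of _ "\<lambda>t. \<Prod>y\<in>S. F y t", simplified]) auto
  thus ?case using insert by (simp add: algebra_simps)
qed


definition Pf :: "real \<Rightarrow> real^3 \<Rightarrow> real fps" where "Pf \<kappa> x = (\<Prod>y\<in>Icos. Bk \<kappa> (x \<bullet> y))"
definition Qf :: "real \<Rightarrow> real^3 \<Rightarrow> real^3 \<Rightarrow> real fps" where "Qf \<kappa> y0 x = Bk 1 (x \<bullet> y0) * Pf \<kappa> x"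

lemma fps_nth_conv_deriv_real:
  fixes f :: "real fps"
  assumes "fps_conv_radius f > 0"
  shows   "fps_nth f n = (deriv ^^ n) (eval_fps f) 0 / fact n"
  using assms
proof (induction n arbitrary: f)
  case 0
  thus ?case by (simp add: eval_fps_def)
next
  case (Suc n f)
  have "(deriv ^^ Suc n) (eval_fps f) 0 = (deriv ^^ n) (deriv (eval_fps f)) 0"
    unfolding funpow_Suc_right o_def ..
  also have "eventually (\<lambda>z::real. z \<in> eball 0 (fps_conv_radius f)) (nhds 0)"
    using Suc.prems by (intro eventually_nhds_in_open) (auto simp: zero_ereal_def)
  hence "eventually (\<lambda>z. deriv (eval_fps f) z = eval_fps (fps_deriv f) z) (nhds 0)"
    by eventually_elim (simp add: eval_fps_deriv)
  hence "(deriv ^^ n) (deriv (eval_fps f)) 0 = (deriv ^^ n) (eval_fps (fps_deriv f)) 0"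
    by (intro higher_deriv_cong_ev refl)
  also have "\<dots> / fact n = fps_nth (fps_deriv f) n"
    using Suc.prems fps_conv_radius_deriv[of f]
    by (intro Suc.IH [symmetric]) auto
  also have "\<dots> / of_nat (Suc n) = fps_nth f (Suc n)"
    by (simp add: fps_deriv_def del: of_nat_Suc)
  finally show ?case by (simp add: field_split_simps)
qed

lemma fps_nth_expansion_real:
  fixes F :: "real fps"
  assumes "f has_fps_expansion F"
  shows "fps_nth F n = (deriv ^^ n) f 0 / fact n"
proof -
  have "fps_nth F n = (deriv ^^ n) (eval_fps F) 0 / fact n"
    using assms by (intro fps_nth_conv_deriv_real) (auto simp: has_fps_expansion_def)
  also have "(deriv ^^ n) (eval_fps F) 0 = (deriv ^^ n) f 0"
    using assms by (intro higher_deriv_cong_ev) (auto simp: has_fps_expansion_def)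
  finally show ?thesis .
qed

lemma Bk_sums:
  assumes "\<bar>r * a\<bar> < 1"
  shows "(\<lambda>n. fps_nth (Bk \<kappa> a) n * r^n) sums ((1 - r * a) powr (-\<kappa>))"
proof -
  have "(\<lambda>n. ((-\<kappa>) gchoose n) * (-(r*a))^n) sums ((1 + (-(r*a))) powr (-\<kappa>))"
    using assms by (intro gen_binomial_real) simp
  moreover have "\<And>n. ((-\<kappa>) gchoose n) * (-(r*a))^n = fps_nth (Bk \<kappa> a) n * r^n"
  proof -
    fix n
    have "((-\<kappa>) gchoose n) * (-(r*a))^n = ((-1)^n * (-1)^n) * (pochhammer \<kappa> n / fact n) * (r^n * a^n)"
      by (simp add: gbinomial_pochhammer power_minus[of "r*a"] power_mult_distrib)
    also have "(-1::real)^n * (-1)^n = 1" by (simp add: power_add[symmetric])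
    finally show "((-\<kappa>) gchoose n) * (-(r*a))^n = fps_nth (Bk \<kappa> a) n * r^n"
      by (simp add: Bk_def)
  qed
  ultimately show ?thesis by simp
qed

lemma Bk_expansion: "(\<lambda>r. (1 - r * a) powr (-\<kappa>)) has_fps_expansion Bk \<kappa> a"
proof -
  define d where "d = 1 / (\<bar>a\<bar> + 1)"
  have d0: "d > 0" by (simp add: d_def add_pos_nonneg)
  have small: "\<bar>r * a\<bar> < 1" if "\<bar>r\<bar> < d" for r
  proof -
    have "\<bar>r * a\<bar> = \<bar>r\<bar> * \<bar>a\<bar>" by (simp add: abs_mult)
    also have "\<dots> \<le> \<bar>r\<bar> * (\<bar>a\<bar> + 1)" by (simp add: mult_left_mono)
    also have "\<dots> < d * (\<bar>a\<bar> + 1)" using that by (intro mult_strict_right_mono) auto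
    also have "\<dots> = 1" by (simp add: d_def)
    finally show ?thesis .
  qed
  have "\<bar>d/2\<bar> < d" using d0 by simp
  hence "summable (\<lambda>n. fps_nth (Bk \<kappa> a) n * (d/2)^n)"
    using Bk_sums small sums_summable by blast
  hence "fps_conv_radius (Bk \<kappa> a) \<ge> norm (d/2)"
    unfolding fps_conv_radius_def by (rule conv_radius_geI)
  moreover have "(0::ereal) < ereal (norm (d/2))" using d0 by simp
  ultimately have rad: "fps_conv_radius (Bk \<kappa> a) > 0" by (meson less_le_trans)
  have "eventually (\<lambda>r::real. r \<in> ball 0 d) (nhds 0)"
    using d0 by (intro eventually_nhds_in_open) auto
  hence "eventually (\<lambda>r. eval_fps (Bk \<kappa> a) r = (1 - r * a) powr (-\<kappa>)) (nhds 0)"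
  proof eventually_elim
    case (elim r)
    hence "\<bar>r\<bar> < d" by (simp add: dist_real_def)
    hence "(\<lambda>n. fps_nth (Bk \<kappa> a) n * r^n) sums ((1 - r * a) powr (-\<kappa>))"
      using Bk_sums small by blast
    thus ?case by (simp add: eval_fps_def sums_iff)
  qed
  with rad show ?thesis by (simp add: has_fps_expansion_def)
qed

lemma G_expansion: "(\<lambda>r. inverse (1 - r * a)) has_fps_expansion Bk 1 a"
proof -
  have e: "(\<lambda>r. (1 - r * a) powr (-1)) has_fps_expansion Bk 1 a" using Bk_expansion[of a 1] by simp
  have "eventually (\<lambda>r::real. r \<in> ball 0 (1 / (\<bar>a\<bar> + 1))) (nhds 0)"
    by (intro eventually_nhds_in_open) (auto simp: add_pos_nonneg)
  hence ev: "eventually (\<lambda>r. (1 - r * a) powr (-1) = inverse (1 - r * a)) (nhds 0)"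
  proof eventually_elim
    case (elim r)
    hence "\<bar>r\<bar> * (\<bar>a\<bar> + 1) < 1" by (simp add: dist_real_def field_simps add_pos_nonneg)
    moreover have "\<bar>r\<bar> * \<bar>a\<bar> \<le> \<bar>r\<bar> * (\<bar>a\<bar> + 1)" by (simp add: mult_left_mono)
    ultimately have "\<bar>r * a\<bar> < 1" by (simp add: abs_mult)
    hence "1 - r * a > 0" by linarith
    thus ?case by (simp add: powr_minus)
  qed
  show ?thesis using e ev unfolding has_fps_expansion_def
    by (auto elim: eventually_elim2)
qed

lemma genfun_expansion: "genfun \<kappa> y0 x has_fps_expansion Qf \<kappa> y0 x"
proof -
  have "(\<lambda>r. inverse (1 - r * (x \<bullet> y0)) * (\<Prod>y\<in>Icos. (1 - r * (x \<bullet> y)) powr (- \<kappa>)))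
        has_fps_expansion Bk 1 (x \<bullet> y0) * (\<Prod>y\<in>Icos. Bk \<kappa> (x \<bullet> y))"
    by (intro has_fps_expansion_mult has_fps_expansion_prod G_expansion Bk_expansion)
  thus ?thesis unfolding Qf_def Pf_def by (simp add: genfun_def[abs_def])
qed

lemma qpoly_eq: "qpoly \<kappa> n y0 x = fps_nth (Qf \<kappa> y0 x) n"
  unfolding qpoly_def using fps_nth_expansion_real[OF genfun_expansion] by simp


lemma line_inner: "(x + t *\<^sub>R axis i 1) \<bullet> y = x \<bullet> y + t * (y $ i)"
  by (simp add: inner_add_left inner_axis')

lemma refl_inner_swap: "refl v x \<bullet> y = x \<bullet> refl v y"
  by (simp add: refl_def inner_diff_left inner_diff_right inner_commute algebra_simps)

lemma refl_invol: assumes "v \<bullet> v \<noteq> 0" shows "refl v (refl v y) = y"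
proof -
  have "refl v y \<bullet> v = - (y \<bullet> v)" using assms by (simp add: refl_def inner_diff_left)
  thus ?thesis using assms by (simp add: refl_def algebra_simps)
qed

lemma tau_pos: "tau > 0" unfolding tau_def by (simp add: add_pos_nonneg)

lemma Icos_neq: "y0 \<in> Icos \<Longrightarrow> y0 \<noteq> - y0"
proof
  assume "y0 \<in> Icos" "y0 = - y0"
  hence "y0 \<bullet> y0 = - (y0 \<bullet> y0)" by (metis inner_minus_right)
  with Icos_norm[OF \<open>y0 \<in> Icos\<close>] tau_pos show False by simp
qed

lemma split_Icos:
  assumes "y0 \<in> Icos"
  shows "sum f Icos = f y0 + f (-y0) + sum f (Icos - {y0, -y0})"
proof -
  have m: "-y0 \<in> Icos - {y0}" using assms neg_Icos Icos_neq by auto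
  have "sum f Icos = f y0 + sum f (Icos - {y0})" by (rule sum.remove[OF finite_Icos assms])
  also have "sum f (Icos - {y0}) = f (-y0) + sum f (Icos - {y0} - {-y0})"
    using m finite_Icos by (intro sum.remove) auto
  also have "Icos - {y0} - {-y0} = Icos - {y0, -y0}" by auto
  finally show ?thesis by (simp add: add.assoc)
qed

lemma card_Icos: "card Icos = 12"
proof -
  have "card Icos = card (set Il)" unfolding Icos_eq by (rule card_image) (simp add: inj_on_def embv_inj)
  also have "\<dots> = length Il" using distinct_Il by (rule distinct_card)
  also have "\<dots> = 12" by (simp add: Il_def)
  finally show ?thesis .
qed

lemma Pf_refl: assumes "v \<in> Rplus" shows "Pf \<kappa> (refl v x) = Pf \<kappa> x"
proof -
  have vv: "v \<bullet> v \<noteq> 0" using Rplus_norm[OF assms] by simp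
  have "Pf \<kappa> (refl v x) = (\<Prod>y\<in>Icos. Bk \<kappa> (x \<bullet> refl v y))"
    by (simp add: Pf_def refl_inner_swap)
  also have "\<dots> = (\<Prod>y\<in>Icos. Bk \<kappa> (x \<bullet> y))"
    by (rule prod.reindex_bij_witness[where i="refl v" and j="refl v"])
       (auto simp: refl_invol[OF vv] refl_Icos[OF assms])
  finally show ?thesis by (simp add: Pf_def)
qed

lemma negf_Pf: "negf (Pf \<kappa> x) = Pf \<kappa> x"
proof -
  have "negf (Pf \<kappa> x) = (\<Prod>y\<in>Icos. Bk \<kappa> (x \<bullet> (- y)))"
    by (simp add: Pf_def negf_prod negf_Bk)
  also have "\<dots> = (\<Prod>y\<in>Icos. Bk \<kappa> (x \<bullet> y))"
    by (rule prod.reindex_bij_witness[where i="uminus" and j="uminus"]) (auto simp: neg_Icos)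
  finally show ?thesis by (simp add: Pf_def)
qed

definition Lf :: "real \<Rightarrow> 3 \<Rightarrow> real^3 \<Rightarrow> real fps" where
  "Lf \<kappa> i x = (\<Sum>y\<in>Icos. fps_const (\<kappa> * y $ i) * fps_X * Bk 1 (x \<bullet> y))"

definition Qd :: "real \<Rightarrow> real^3 \<Rightarrow> 3 \<Rightarrow> real^3 \<Rightarrow> real fps" where
  "Qd \<kappa> y0 i x = Bd 1 (x \<bullet> y0) (y0 $ i) * Pf \<kappa> x + Bk 1 (x \<bullet> y0) * (Pf \<kappa> x * Lf \<kappa> i x)"

lemma cder_Bk: "cder (\<lambda>t. Bk \<kappa> ((x + t *\<^sub>R axis i 1) \<bullet> y)) (Bd \<kappa> (x \<bullet> y) (y $ i))"
  unfolding cder_def line_inner using Bk_line by blast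

lemma cder_Q: "cder (\<lambda>t. Qf \<kappa> y0 (x + t *\<^sub>R axis i 1)) (Qd \<kappa> y0 i x)"
proof -
  have cP: "cder (\<lambda>t. \<Prod>y\<in>Icos. Bk \<kappa> ((x + t *\<^sub>R axis i 1) \<bullet> y))
      ((\<Prod>y\<in>Icos. Bk \<kappa> ((x + 0 *\<^sub>R axis i 1) \<bullet> y)) * (\<Sum>y\<in>Icos. fps_const (\<kappa> * y $ i) * fps_X * Bk 1 (x \<bullet> y)))"
  proof (rule cder_prod[OF finite_Icos])
    fix y assume "y \<in> Icos"
    show "cder (\<lambda>t. Bk \<kappa> ((x + t *\<^sub>R axis i 1) \<bullet> y))
          (Bk \<kappa> ((x + 0 *\<^sub>R axis i 1) \<bullet> y) * (fps_const (\<kappa> * y $ i) * fps_X * Bk 1 (x \<bullet> y)))"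
      using cder_Bk[of \<kappa> x i y] by (simp add: Bd_eq)
  qed
  have "cder (\<lambda>t. Bk 1 ((x + t *\<^sub>R axis i 1) \<bullet> y0) * (\<Prod>y\<in>Icos. Bk \<kappa> ((x + t *\<^sub>R axis i 1) \<bullet> y)))
     (Bd 1 (x \<bullet> y0) (y0 $ i) * (\<Prod>y\<in>Icos. Bk \<kappa> ((x + 0 *\<^sub>R axis i 1) \<bullet> y)) +
      Bk 1 ((x + 0 *\<^sub>R axis i 1) \<bullet> y0) * ((\<Prod>y\<in>Icos. Bk \<kappa> ((x + 0 *\<^sub>R axis i 1) \<bullet> y)) * (\<Sum>y\<in>Icos. fps_const (\<kappa> * y $ i) * fps_X * Bk 1 (x \<bullet> y))))"
    by (rule cder_mult[OF cder_Bk cP])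
  thus ?thesis by (simp add: Qf_def Qd_def Pf_def Lf_def)
qed

lemma partial_Q: "partial i (\<lambda>z. Qf \<kappa> y0 z $$ n) x = Qd \<kappa> y0 i x $$ n"
  unfolding partial_def using cder_Q[of \<kappa> y0 x i] unfolding cder_def by (blast intro: DERIV_imp_deriv)


definition Tf :: "real \<Rightarrow> real^3 \<Rightarrow> real^3 \<Rightarrow> real fps" where
  "Tf \<kappa> y0 x = fps_X * fps_deriv (fps_X * Qf \<kappa> y0 x) + fps_const (10*\<kappa>) * fps_X * Qf \<kappa> y0 x
     + fps_const \<kappa> * fps_X * (Qf \<kappa> y0 x - negf (Qf \<kappa> y0 x))"

lemma main_fps:
  assumes y0: "y0 \<in> Icos" and reg: "\<forall>v\<in>Rplus. x \<bullet> v \<noteq> 0"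
  shows "Qd \<kappa> y0 i x + (\<Sum>v\<in>Rplus. fps_const (\<kappa> * v $ i / (x \<bullet> v)) * (Qf \<kappa> y0 x - Qf \<kappa> y0 (refl v x)))
         = fps_const (y0 $ i) * Tf \<kappa> y0 x"
proof -
  define a0 where "a0 = x \<bullet> y0"
  define G where "G = Bk 1 a0"
  define Gm where "Gm = Bk 1 (-a0)"
  define P where "P = Pf \<kappa> x"
  define K where "K = fps_const \<kappa>"
  define C where "C = fps_const (y0 $ i)"
  define X where "X = (fps_X :: real fps)"
  define I' where "I' = Icos - {y0, -y0}"
  define S0 where "S0 = (\<Sum>y\<in>I'. Bk 1 (x \<bullet> y))"
  define S1 where "S1 = (\<Sum>y\<in>I'. fps_const (y $ i) * Bk 1 (x \<bullet> y))"
  define Q where "Q = Qf \<kappa> y0 x"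
  have hQ: "Q = G * P" by (simp add: Q_def Qf_def G_def P_def a0_def)
  have s3: "fps_const (\<kappa> * v $ i / (x \<bullet> v)) * (Q - Qf \<kappa> y0 (refl v x))
            = K * X * G * P * (fps_const ((y0 - refl v y0) $ i) * Bk 1 (x \<bullet> refl v y0))"
    if v: "v \<in> Rplus" for v
  proof -
    define b where "b = x \<bullet> refl v y0"
    define c where "c = 2 * (y0 \<bullet> v) / (v \<bullet> v)"
    have xv: "x \<bullet> v \<noteq> 0" using reg v by auto
    have Qs: "Qf \<kappa> y0 (refl v x) = Bk 1 b * P"
      by (simp add: Qf_def Pf_refl[OF v] refl_inner_swap b_def P_def)
    have "Q - Qf \<kappa> y0 (refl v x) = (G - Bk 1 b) * P" by (simp add: Qs hQ algebra_simps)
    also have "G - Bk 1 b = fps_const (a0 - b) * X * G * Bk 1 b" by (simp add: G_def X_def G_diff)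
    finally have d: "Q - Qf \<kappa> y0 (refl v x) = fps_const (a0 - b) * X * G * Bk 1 b * P" .
    have ab: "a0 - b = c * (x \<bullet> v)"
      by (simp add: a0_def b_def c_def refl_def inner_diff_right)
    have yi: "y0 $ i - refl v y0 $ i = c * v $ i"
      by (simp add: c_def refl_def)
    have sc: "\<kappa> * v $ i / (x \<bullet> v) * (a0 - b) = \<kappa> * ((y0 - refl v y0) $ i)"
      using xv by (simp add: ab yi)
    have "fps_const (\<kappa> * v $ i / (x \<bullet> v)) * (Q - Qf \<kappa> y0 (refl v x))
        = fps_const (\<kappa> * v $ i / (x \<bullet> v) * (a0 - b)) * X * G * Bk 1 b * P"
      by (simp add: d mult.assoc fps_const_mult[symmetric])
    also have "\<dots> = K * fps_const ((y0 - refl v y0) $ i) * X * G * Bk 1 b * P"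
      by (simp only: sc K_def fps_const_mult[symmetric])
    finally show ?thesis by (simp add: b_def mult_ac)
  qed
  have s4: "(\<Sum>v\<in>Rplus. fps_const (\<kappa> * v $ i / (x \<bullet> v)) * (Q - Qf \<kappa> y0 (refl v x)))
            = K * X * G * P * (C * S0 - S1)"
  proof -
    have "(\<Sum>v\<in>Rplus. fps_const (\<kappa> * v $ i / (x \<bullet> v)) * (Q - Qf \<kappa> y0 (refl v x)))
         = (\<Sum>v\<in>Rplus. K * X * G * P * (fps_const ((y0 - refl v y0) $ i) * Bk 1 (x \<bullet> refl v y0)))"
      by (rule sum.cong) (simp_all add: s3)
    also have "\<dots> = K * X * G * P * (\<Sum>v\<in>Rplus. (\<lambda>y. fps_const ((y0 - y) $ i) * Bk 1 (x \<bullet> y)) (refl v y0))"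
      by (simp add: sum_distrib_left)
    also have "(\<Sum>v\<in>Rplus. (\<lambda>y. fps_const ((y0 - y) $ i) * Bk 1 (x \<bullet> y)) (refl v y0))
        = (\<Sum>y\<in>I'. fps_const ((y0 - y) $ i) * Bk 1 (x \<bullet> y))"
      unfolding I'_def by (rule key_sum[OF y0]) simp
    also have "\<dots> = (\<Sum>y\<in>I'. C * Bk 1 (x \<bullet> y) - fps_const (y $ i) * Bk 1 (x \<bullet> y))"
      by (rule sum.cong) (simp_all add: C_def algebra_simps fps_const_sub[symmetric] del: fps_const_sub)
    also have "\<dots> = C * S0 - S1"
      by (simp add: S0_def S1_def sum_subtractf sum_distrib_left)
    finally show ?thesis .
  qed
  have s5: "Lf \<kappa> i x = K * X * (S1 + C * G - C * Gm)"
  proof -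
    have "Lf \<kappa> i x = (\<Sum>y\<in>Icos. K * X * (fps_const (y $ i) * Bk 1 (x \<bullet> y)))"
      unfolding Lf_def by (rule sum.cong) (simp_all add: K_def X_def mult_ac fps_const_mult[symmetric] del: fps_const_mult)
    also have "\<dots> = K * X * (fps_const (y0 $ i) * Bk 1 (x \<bullet> y0)) + K * X * (fps_const ((-y0) $ i) * Bk 1 (x \<bullet> (-y0)))
                 + (\<Sum>y\<in>I'. K * X * (fps_const (y $ i) * Bk 1 (x \<bullet> y)))"
      unfolding I'_def by (rule split_Icos[OF y0])
    also have "\<dots> = K * X * (S1 + C * G - C * Gm)"
      by (simp add: S1_def C_def G_def Gm_def a0_def sum_distrib_left algebra_simps fps_const_neg[symmetric] del: fps_const_neg)
    finally show ?thesis .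
  qed
  have s6: "X * fps_deriv P = P * (K * (S0 + G + Gm - 12))"
  proof -
    have dP: "fps_deriv P = P * (\<Sum>y\<in>Icos. fps_const (\<kappa> * (x \<bullet> y)) * Bk 1 (x \<bullet> y))"
      unfolding P_def Pf_def by (rule fps_deriv_prod'[OF finite_Icos]) (simp add: Bk_deriv)
    have "X * (\<Sum>y\<in>Icos. fps_const (\<kappa> * (x \<bullet> y)) * Bk 1 (x \<bullet> y))
         = K * (\<Sum>y\<in>Icos. fps_const (x \<bullet> y) * fps_X * Bk 1 (x \<bullet> y))"
      by (simp add: sum_distrib_left K_def X_def mult_ac fps_const_mult[symmetric] del: fps_const_mult)
    also have "\<dots> = K * (\<Sum>y\<in>Icos. Bk 1 (x \<bullet> y) - 1)" by (simp add: G_Xa)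
    also have "\<dots> = K * ((\<Sum>y\<in>Icos. Bk 1 (x \<bullet> y)) - of_nat (card Icos))"
      by (simp add: sum_subtractf)
    also have "(\<Sum>y\<in>Icos. Bk 1 (x \<bullet> y)) = G + Gm + S0"
      unfolding S0_def I'_def G_def Gm_def a0_def by (subst split_Icos[OF y0]) simp
    finally have hs: "X * (\<Sum>y\<in>Icos. fps_const (\<kappa> * (x \<bullet> y)) * Bk 1 (x \<bullet> y)) = K * (G + Gm + S0 - of_nat 12)"
      using card_Icos by simp
    have "X * fps_deriv P = P * (X * (\<Sum>y\<in>Icos. fps_const (\<kappa> * (x \<bullet> y)) * Bk 1 (x \<bullet> y)))"
      by (simp only: dP mult.left_commute)
    also have "\<dots> = P * (K * (S0 + G + Gm - 12))" by (simp only: hs) (simp add: algebra_simps)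
    finally show ?thesis .
  qed
  have s7: "negf Q = Gm * P"
    by (simp add: hQ negf_mult G_def Gm_def negf_Bk P_def negf_Pf)
  have s8: "X * fps_deriv G = (G - 1) * G"
  proof -
    have "X * fps_deriv G = (fps_const a0 * X * G) * G" by (simp add: G_def Bk_deriv mult_ac)
    thus ?thesis by (simp add: G_Xa G_def X_def)
  qed
  have s9: "Bd 1 a0 (y0 $ i) = G * (C * X * G)" by (simp add: Bd_eq G_def C_def X_def)
  have pm: "2 * (G * Gm) = G + Gm" by (simp add: G_pm G_def Gm_def)
  have hQd: "Qd \<kappa> y0 i x = G * (C * X * G) * P + G * (P * (K * X * (S1 + C * G - C * Gm)))"
  proof -
    have "Qd \<kappa> y0 i x = Bd 1 a0 (y0 $ i) * P + G * (P * Lf \<kappa> i x)"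
      by (simp add: Qd_def a0_def G_def P_def)
    thus ?thesis by (simp only: s9 s5)
  qed
  have hdXQ: "fps_deriv (X * Q) = Q + X * (fps_deriv G * P + G * fps_deriv P)"
    by (simp add: X_def hQ algebra_simps)
  have hT: "Tf \<kappa> y0 x = X * fps_deriv (X * Q) + 10 * K * X * Q + K * X * (Q - negf Q)"
    by (simp add: Tf_def X_def Q_def K_def fps_numeral_fps_const)
  have "Qd \<kappa> y0 i x + (\<Sum>v\<in>Rplus. fps_const (\<kappa> * v $ i / (x \<bullet> v)) * (Q - Qf \<kappa> y0 (refl v x)))
        = C * Tf \<kappa> y0 x"
    unfolding hQd s4 hT hdXQ s7 using s6 s8 pm hQ by algebra
  thus ?thesis by (simp add: Q_def C_def)
qed


definition mu :: "real \<Rightarrow> nat \<Rightarrow> real" where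
  "mu \<kappa> n = of_nat n + 10 * \<kappa> + (if even n then 2 * \<kappa> else 0)"

definition reg :: "real^3 \<Rightarrow> bool" where "reg x \<longleftrightarrow> (\<forall>v\<in>Rplus. x \<bullet> v \<noteq> 0)"

lemma T_nth:
  assumes "n \<ge> 1"
  shows "Tf \<kappa> y0 x $$ n = mu \<kappa> n * Qf \<kappa> y0 x $$ (n - 1)"
proof -
  obtain m where n: "n = Suc m" using assms by (cases n) auto
  define Q where "Q = Qf \<kappa> y0 x"
  have a: "(fps_X * fps_deriv (fps_X * Q)) $$ Suc m = of_nat (Suc m) * Q $$ m"
    by (simp add: algebra_simps)
  have b: "(fps_const (10*\<kappa>) * fps_X * Q) $$ Suc m = 10 * \<kappa> * Q $$ m"
    by (simp add: cX_nth)
  have c: "(fps_const \<kappa> * fps_X * (Q - negf Q)) $$ Suc m = \<kappa> * (Q $$ m - (-1)^m * Q $$ m)"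
    by (simp add: cX_nth negf_def)
  have "Tf \<kappa> y0 x $$ n = of_nat (Suc m) * Q $$ m + 10 * \<kappa> * Q $$ m + \<kappa> * (Q $$ m - (-1)^m * Q $$ m)"
    unfolding Tf_def Q_def[symmetric] n fps_add_nth a b c ..
  also have "\<dots> = mu \<kappa> n * Q $$ m"
    by (cases "even m") (auto simp: mu_def n algebra_simps)
  finally show ?thesis by (simp add: Q_def n)
qed

lemma partial_cQ: "partial i (\<lambda>z. c * (Qf \<kappa> y0 z $$ n)) x = c * (Qd \<kappa> y0 i x $$ n)"
proof -
  have "((\<lambda>t. Qf \<kappa> y0 (x + t *\<^sub>R axis i 1) $$ n) has_real_derivative Qd \<kappa> y0 i x $$ n) (at 0)"
    using cder_Q[of \<kappa> y0 x i] unfolding cder_def by blast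
  hence "((\<lambda>t. c * Qf \<kappa> y0 (x + t *\<^sub>R axis i 1) $$ n) has_real_derivative c * (Qd \<kappa> y0 i x $$ n)) (at 0)"
    by (rule DERIV_cmult)
  thus ?thesis unfolding partial_def by (rule DERIV_imp_deriv)
qed

lemma dunkl_q:
  assumes y0: "y0 \<in> Icos" and r: "reg x" and n: "n \<ge> 1"
  shows "dunkl \<kappa> i (\<lambda>z. c * qpoly \<kappa> n y0 z) x = c * (y0 $ i * mu \<kappa> n * qpoly \<kappa> (n - 1) y0 x)"
proof -
  define Q where "Q = Qf \<kappa> y0"
  have sum_eq: "\<kappa> * (\<Sum>v\<in>Rplus. (c * Q x $$ n - c * Q (refl v x) $$ n) / (x \<bullet> v) * v $ i)
      = c * ((\<Sum>v\<in>Rplus. fps_const (\<kappa> * v $ i / (x \<bullet> v)) * (Q x - Q (refl v x))) $$ n)"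
    by (simp add: fps_sum_nth sum_distrib_left algebra_simps diff_divide_distrib)
  have "dunkl \<kappa> i (\<lambda>z. c * qpoly \<kappa> n y0 z) x
      = c * (Qd \<kappa> y0 i x $$ n) + \<kappa> * (\<Sum>v\<in>Rplus. (c * Q x $$ n - c * Q (refl v x) $$ n) / (x \<bullet> v) * v $ i)"
    by (simp add: dunkl_def qpoly_eq Q_def partial_cQ)
  also have "\<dots> = c * ((Qd \<kappa> y0 i x + (\<Sum>v\<in>Rplus. fps_const (\<kappa> * v $ i / (x \<bullet> v)) * (Q x - Q (refl v x)))) $$ n)"
    by (simp only: sum_eq fps_add_nth) (simp add: algebra_simps)
  also have "Qd \<kappa> y0 i x + (\<Sum>v\<in>Rplus. fps_const (\<kappa> * v $ i / (x \<bullet> v)) * (Q x - Q (refl v x)))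
      = fps_const (y0 $ i) * Tf \<kappa> y0 x"
    unfolding Q_def using main_fps[OF y0] r by (simp add: reg_def)
  also have "(fps_const (y0 $ i) * Tf \<kappa> y0 x) $$ n = y0 $ i * (mu \<kappa> n * Qf \<kappa> y0 x $$ (n - 1))"
    using T_nth[OF n] by simp
  finally show ?thesis by (simp add: qpoly_eq mult_ac)
qed

lemma open_reg_pre:
  assumes "continuous_on UNIV h"
  shows "open {t. \<forall>v\<in>Rplus. h t \<bullet> v \<noteq> 0}"
proof -
  have "{t. \<forall>v\<in>Rplus. h t \<bullet> v \<noteq> 0} = (\<Inter>v\<in>Rplus. {t. h t \<bullet> v \<noteq> 0})" by auto
  moreover have "open {t. h t \<bullet> v \<noteq> 0}" for v
    by (rule open_Collect_neq) (auto intro!: continuous_intros assms)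
  ultimately show ?thesis using finite_Rplus by (simp add: open_INT)
qed

lemma reg_refl: assumes "reg x" "v \<in> Rplus" shows "reg (refl v x)"
  unfolding reg_def
proof
  fix w assume w: "w \<in> Rplus"
  have "refl v x \<bullet> w = x \<bullet> refl v w" by (rule refl_inner_swap)
  moreover from refl_Rplus[OF assms(2) w] have "x \<bullet> refl v w \<noteq> 0"
    using assms(1) unfolding reg_def by (metis add.inverse_neutral inner_minus_right)
  ultimately show "refl v x \<bullet> w \<noteq> 0" by simp
qed

lemma dunkl_local:
  assumes r: "reg x" and fg: "\<And>z. reg z \<Longrightarrow> f z = g z"
  shows "dunkl \<kappa> i f x = dunkl \<kappa> i g x"
proof -
  define S where "S = {t::real. \<forall>v\<in>Rplus. (x + t *\<^sub>R axis i 1) \<bullet> v \<noteq> 0}"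
  have "open S" unfolding S_def by (rule open_reg_pre) (auto intro!: continuous_intros)
  moreover have "0 \<in> S" using r by (simp add: S_def reg_def)
  ultimately have "eventually (\<lambda>t. t \<in> S) (nhds 0)" by (rule eventually_nhds_in_open)
  hence "eventually (\<lambda>t. f (x + t *\<^sub>R axis i 1) = g (x + t *\<^sub>R axis i 1)) (nhds 0)"
    by eventually_elim (simp add: S_def fg reg_def)
  hence p: "partial i f x = partial i g x" unfolding partial_def by (rule deriv_cong_ev) simp
  have "f x = g x" using r fg by blast
  moreover have "\<And>v. v \<in> Rplus \<Longrightarrow> f (refl v x) = g (refl v x)" using fg reg_refl r by blast
  ultimately show ?thesis unfolding dunkl_def p by (simp cong: sum.cong)
qed

lemma dunkl_lap_local:
  assumes r: "reg x" and fg: "\<And>z. reg z \<Longrightarrow> f z = g z"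
  shows "dunkl_lap \<kappa> f x = dunkl_lap \<kappa> g x"
proof -
  have h: "dunkl \<kappa> i f z = dunkl \<kappa> i g z" if "reg z" for i z by (rule dunkl_local[OF that fg])
  have "\<And>i. dunkl \<kappa> i (dunkl \<kappa> i f) x = dunkl \<kappa> i (dunkl \<kappa> i g) x" by (rule dunkl_local[OF r h])
  thus ?thesis by (simp add: dunkl_lap_def)
qed

lemma lap_q:
  assumes y0: "y0 \<in> Icos" and r: "reg x" and n: "n \<ge> 2"
  shows "dunkl_lap \<kappa> (\<lambda>z. c * qpoly \<kappa> n y0 z) x = c * ((tau + 2) * mu \<kappa> n * mu \<kappa> (n - 1)) * qpoly \<kappa> (n - 2) y0 x"
proof -
  have dq: "dunkl \<kappa> i (\<lambda>z. c * qpoly \<kappa> n y0 z) z = (c * (y0 $ i * mu \<kappa> n)) * qpoly \<kappa> (n - 1) y0 z"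
    if "reg z" for i z using dunkl_q[OF y0 that, of n \<kappa> i c] n by (simp add: mult_ac)
  have e: "dunkl \<kappa> i (dunkl \<kappa> i (\<lambda>z. c * qpoly \<kappa> n y0 z)) x
        = (y0 $ i * y0 $ i) * (c * mu \<kappa> n * mu \<kappa> (n - 1) * qpoly \<kappa> (n - 2) y0 x)" for i
  proof -
    have "dunkl \<kappa> i (dunkl \<kappa> i (\<lambda>z. c * qpoly \<kappa> n y0 z)) x
        = dunkl \<kappa> i (\<lambda>z. (c * (y0 $ i * mu \<kappa> n)) * qpoly \<kappa> (n - 1) y0 z) x"
      by (rule dunkl_local[OF r dq])
    also have "\<dots> = (c * (y0 $ i * mu \<kappa> n)) * (y0 $ i * mu \<kappa> (n - 1) * qpoly \<kappa> (n - 1 - 1) y0 x)"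
      by (rule dunkl_q[OF y0 r]) (use n in simp)
    also have nn: "n - 1 - 1 = n - 2" by simp
    finally show ?thesis unfolding nn by (simp only: mult_ac)
  qed
  have "dunkl_lap \<kappa> (\<lambda>z. c * qpoly \<kappa> n y0 z) x = (\<Sum>i\<in>UNIV. y0 $ i * y0 $ i) * (c * mu \<kappa> n * mu \<kappa> (n - 1) * qpoly \<kappa> (n - 2) y0 x)"
    by (simp add: dunkl_lap_def e sum_distrib_right)
  also have "(\<Sum>i\<in>UNIV. y0 $ i * y0 $ i) = tau + 2" using Icos_norm[OF y0] by (simp add: inner_vec_def)
  finally show ?thesis by (simp add: mult_ac)
qed


lemma nu_pos: assumes "\<kappa> \<ge> 0" shows "nu \<kappa> n > 0"
  unfolding nu_def using assms by (intro mult_pos_pos pochhammer_pos) auto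

lemma nu_rec: "nu \<kappa> (Suc m) = mu \<kappa> (Suc m) * nu \<kappa> m"
proof (cases "even m")
  case True
  then obtain s where m: "m = 2 * s" by (rule evenE)
  have d1: "Suc (2 * s) div 2 = s" by simp
  have d2: "(Suc (2 * s) + 1) div 2 = Suc s" by simp
  have d3: "(2 * s + 1) div 2 = s" by simp
  show ?thesis
    by (simp add: nu_def mu_def m d1 d2 d3 pochhammer_Suc algebra_simps del: of_nat_Suc)
       (simp add: field_simps)
next
  case False
  then obtain s where m: "m = 2 * s + 1" by (rule oddE)
  have d1: "Suc (2 * s + 1) div 2 = Suc s" by simp
  have d2: "(Suc (2 * s + 1) + 1) div 2 = Suc s" by simp
  have d3: "(2 * s + 1 + 1) div 2 = Suc s" by simp
  have d4: "(2 * s + 1) div 2 = s" by simp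
  show ?thesis
    by (simp add: nu_def mu_def m d1 d2 d3 d4 pochhammer_Suc algebra_simps del: of_nat_Suc)
       (simp add: algebra_simps)
qed

definition Cm :: "real \<Rightarrow> nat \<Rightarrow> nat \<Rightarrow> real" where
  "Cm \<kappa> n m = (\<Prod>j<m. (tau + 2) * mu \<kappa> (n - 2*j) * mu \<kappa> (n - 2*j - 1))"

lemma iter:
  assumes y0: "y0 \<in> Icos"
  shows "2 * m \<le> n \<Longrightarrow> reg x \<Longrightarrow> (dunkl_lap \<kappa> ^^ m) (qpoly \<kappa> n y0) x = Cm \<kappa> n m * qpoly \<kappa> (n - 2*m) y0 x"
proof (induction m arbitrary: x)
  case 0 thus ?case by (simp add: Cm_def)
next
  case (Suc m)
  have IH: "\<And>z. reg z \<Longrightarrow> (dunkl_lap \<kappa> ^^ m) (qpoly \<kappa> n y0) z = Cm \<kappa> n m * qpoly \<kappa> (n - 2*m) y0 z"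
    using Suc by simp
  have "(dunkl_lap \<kappa> ^^ Suc m) (qpoly \<kappa> n y0) x = dunkl_lap \<kappa> ((dunkl_lap \<kappa> ^^ m) (qpoly \<kappa> n y0)) x"
    by simp
  also have "\<dots> = dunkl_lap \<kappa> (\<lambda>z. Cm \<kappa> n m * qpoly \<kappa> (n - 2*m) y0 z) x"
    by (rule dunkl_lap_local[OF Suc.prems(2) IH])
  also have "\<dots> = Cm \<kappa> n m * ((tau + 2) * mu \<kappa> (n - 2*m) * mu \<kappa> (n - 2*m - 1)) * qpoly \<kappa> (n - 2*m - 2) y0 x"
    by (rule lap_q[OF y0 Suc.prems(2)]) (use Suc.prems(1) in simp)
  also have "n - 2*m - 2 = n - 2 * Suc m" by simp
  also have "Cm \<kappa> n m * ((tau + 2) * mu \<kappa> (n - 2*m) * mu \<kappa> (n - 2*m - 1)) = Cm \<kappa> n (Suc m)"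
    by (simp add: Cm_def)
  finally show ?case .
qed

lemma Cm_eq:
  assumes k: "\<kappa> \<ge> 0"
  shows "2 * m \<le> n \<Longrightarrow> Cm \<kappa> n m = nu \<kappa> n / nu \<kappa> (n - 2*m) * (tau + 2)^m"
proof (induction m)
  case 0 thus ?case using nu_pos[OF k, of n] by (simp add: Cm_def)
next
  case (Suc m)
  have IH: "Cm \<kappa> n m = nu \<kappa> n / nu \<kappa> (n - 2*m) * (tau + 2)^m" using Suc by simp
  define r where "r = n - 2 * m - 2"
  have r1: "n - 2*m = Suc (Suc r)" using Suc.prems by (simp add: r_def)
  have r2: "n - 2*m - 1 = Suc r" using Suc.prems by (simp add: r_def)
  have r3: "n - 2 * Suc m = r" by (simp add: r_def)
  have nu2: "nu \<kappa> (n - 2*m) = mu \<kappa> (n - 2*m) * mu \<kappa> (n - 2*m - 1) * nu \<kappa> r"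
    unfolding r1 r2 by (simp add: nu_rec)
  have pos: "nu \<kappa> r > 0" "nu \<kappa> (n - 2*m) > 0" using nu_pos[OF k] by auto
  define A where "A = mu \<kappa> (n - 2*m)"
  define B where "B = mu \<kappa> (n - 2*m - 1)"
  have nz: "A \<noteq> 0" "B \<noteq> 0" "nu \<kappa> r \<noteq> 0" using pos nu2 unfolding A_def B_def by auto
  have "Cm \<kappa> n (Suc m) = Cm \<kappa> n m * ((tau + 2) * A * B)"
    by (simp add: Cm_def A_def B_def)
  also have "\<dots> = nu \<kappa> n / (A * B * nu \<kappa> r) * (tau + 2)^m * ((tau + 2) * A * B)"
    unfolding IH nu2 A_def B_def ..
  also have "\<dots> = nu \<kappa> n / nu \<kappa> r * (tau + 2)^(Suc m)"
    using nz by (simp add: field_simps)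
  finally show ?case by (simp only: r3)
qed

theorem mainTheorem4:
  fixes \<kappa> :: real and y0 :: "real^3"
  assumes "\<kappa> \<ge> 0" and "y0 \<in> Icos"
  shows "(\<forall>n::nat. n \<ge> 2 \<longrightarrow>
            (\<forall>x. (\<forall>v\<in>Rplus. x \<bullet> v \<noteq> 0) \<longrightarrow>
               dunkl_lap \<kappa> (qpoly \<kappa> n y0) x
                 = nu \<kappa> n / nu \<kappa> (n - 2) * (tau + 2) * qpoly \<kappa> (n - 2) y0 x))
       \<and> (\<forall>n m::nat. 1 \<le> m \<and> 2 * m \<le> n \<longrightarrow>
            (\<forall>x. (\<forall>v\<in>Rplus. x \<bullet> v \<noteq> 0) \<longrightarrow>
               (dunkl_lap \<kappa> ^^ m) (qpoly \<kappa> n y0) x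
                 = nu \<kappa> n / nu \<kappa> (n - 2 * m) * (tau + 2) ^ m * qpoly \<kappa> (n - 2 * m) y0 x))"
proof -
  have gen: "(dunkl_lap \<kappa> ^^ m) (qpoly \<kappa> n y0) x
                 = nu \<kappa> n / nu \<kappa> (n - 2 * m) * (tau + 2) ^ m * qpoly \<kappa> (n - 2 * m) y0 x"
    if "2 * m \<le> n" "\<forall>v\<in>Rplus. x \<bullet> v \<noteq> 0" for n m x
    using iter[OF assms(2) that(1), of x \<kappa>] Cm_eq[OF assms(1) that(1)] that(2) by (simp add: reg_def)
  show ?thesis
  proof (intro conjI allI impI)
    fix n x assume "n \<ge> (2::nat)" "\<forall>v\<in>Rplus. x \<bullet> v \<noteq> 0"
    thus "dunkl_lap \<kappa> (qpoly \<kappa> n y0) x = nu \<kappa> n / nu \<kappa> (n - 2) * (tau + 2) * qpoly \<kappa> (n - 2) y0 x"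
      using gen[of 1 n x] by simp
  next
    fix n m :: nat and x assume "1 \<le> m \<and> 2 * m \<le> n" "\<forall>v\<in>Rplus. x \<bullet> v \<noteq> 0"
    thus "(dunkl_lap \<kappa> ^^ m) (qpoly \<kappa> n y0) x
                 = nu \<kappa> n / nu \<kappa> (n - 2 * m) * (tau + 2) ^ m * qpoly \<kappa> (n - 2 * m) y0 x"
      using gen by blast
  qed
qed


end
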